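(* Let $\Omega,\Omega^*$ be compact metric spaces and $c\in C(\Omega\times\Omega^* )$. Let $\mu_1,\mu_2$ be Borel probability measures on $\Omega$, $\nu$ a Borel probability measure on $\Omega^*$, and $\phi_i\in\Phi_c(\mu_i,\nu)$ for $i=1,2$. Suppose that at least one of the $\phi_i$ is unique up to an additive constant, i.e. $\Phi_c(\mu_i,\nu)=\{\phi_i+C: C\in\mathbb R\}$ for $i=1$ or $i=2$. Consider a Borel set $U\subset\Omega$ with $U\neq\Omega$ such that $\mu_1\leq\mu_2$ on $U$ and $\phi_1\leq\phi_2$ on $\Omega\setminus U$. Then $\phi_1\leq\phi_2$ on $\Omega$.
   Context: For $\phi\in C(\Omega)$, $\phi^c(y)=\sup_{x\in\Omega}\phi(x)-c(x,y)$. $\mathcal T_c(\mu,\nu)=\inf_{\pi\in\Pi(\mu,\nu)}\int c\,d\pi$ over couplings $\pi$ of $\mu$ and $\nu$; by duality $\mathcal T_c(\mu,\nu)=\max_{\phi\in C(\Omega)}\int\phi\,d\mu-\int\phi^c\,d\nu$. $\Phi_c(\mu,\nu)=\{\phi\in C(\Omega):\int_\Omega\phi\,d\mu-\int_{\Omega^*}\phi^c\,d\nu=\mathcal T_c(\mu,\nu)\}$. "$\mu_1\leq\mu_2$ on $U$" means $\mu_1(A)\leq\mu_2(A)$ for all Borel $A\subset U$. *)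

theory Defs
  imports "HOL-Probability.Probability"
begin

text \<open>Compact metric spaces are modelled as types \<open>'a\<close>, \<open>'b\<close> of class metric_space
  with compact UNIV.  Borel probability measures are measures \<open>M\<close> with
  \<open>sets M = sets borel\<close> and \<open>prob_space M\<close>.\<close>

definition c_transform :: "('a \<times> 'b \<Rightarrow> real) \<Rightarrow> ('a \<Rightarrow> real) \<Rightarrow> 'b \<Rightarrow> real" where
  "c_transform c \<phi> y = (SUP x. \<phi> x - c (x, y))"

definition couplings :: "'a::topological_space measure \<Rightarrow> 'b::topological_space measure \<Rightarrow> ('a \<times> 'b) measure set" where
  "couplings \<mu> \<nu> = {\<pi>. sets \<pi> = sets borel \<and> distr \<pi> borel fst = \<mu> \<and> distr \<pi> borel snd = \<nu>}"

definition ot_cost :: "('a::topological_space \<times> 'b::topological_space \<Rightarrow> real) \<Rightarrow> 'a measure \<Rightarrow> 'b measure \<Rightarrow> real" where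
  "ot_cost c \<mu> \<nu> = Inf {integral\<^sup>L \<pi> c | \<pi>. \<pi> \<in> couplings \<mu> \<nu>}"

definition kantorovich_potentials ::
  "('a::topological_space \<times> 'b::topological_space \<Rightarrow> real) \<Rightarrow> 'a measure \<Rightarrow> 'b measure \<Rightarrow> ('a \<Rightarrow> real) set" where
  "kantorovich_potentials c \<mu> \<nu> =
     {\<phi>. continuous_on UNIV \<phi> \<and>
          integral\<^sup>L \<mu> \<phi> - integral\<^sup>L \<nu> (c_transform c \<phi>) = ot_cost c \<mu> \<nu>}"

definition measure_le_on :: "'a measure \<Rightarrow> 'a measure \<Rightarrow> 'a set \<Rightarrow> bool" where
  "measure_le_on \<mu>1 \<mu>2 U \<longleftrightarrow> (\<forall>A \<in> sets \<mu>1. A \<subseteq> U \<longrightarrow> emeasure \<mu>1 A \<le> emeasure \<mu>2 A)"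

end

theory Submission
  imports Defs
begin

lemma compact_countable_basis:
  assumes "compact (UNIV::'a::metric_space set)"
  obtains B :: "'a::metric_space set set" where "countable B" "topological_basis B"
proof -
  have "\<forall>e>0. \<exists>k. finite k \<and> k \<subseteq> (UNIV::'a set) \<and> UNIV \<subseteq> (\<Union>x\<in>k. ball x e)"
    by (rule seq_compact_imp_totally_bounded) (use assms compact_imp_seq_compact in blast)
  then have "\<forall>n::nat. \<exists>k. finite k \<and> (UNIV::'a set) \<subseteq> (\<Union>x\<in>k. ball x (inverse (real (Suc n))))"
    by (metis inverse_positive_iff_positive of_nat_0_less_iff zero_less_Suc)
  then obtain F where F: "\<And>n. finite (F n)" "\<And>n. (UNIV::'a set) \<subseteq> (\<Union>x\<in>F n. ball x (inverse (real (Suc n))))"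
    by metis
  define B where "B = (\<Union>n. (\<lambda>x. ball x (inverse (real (Suc n)))) ` F n)"
  have "countable B" unfolding B_def using F(1) by (intro countable_UN) (auto intro: countable_finite)
  moreover have "topological_basis B"
  proof (rule topological_basisI)
    fix B' assume "B' \<in> B" then show "open B'" by (auto simp: B_def)
  next
    fix O' and x :: 'a assume "open O'" "x \<in> O'"
    then obtain e where e: "e > 0" "ball x e \<subseteq> O'" by (meson open_contains_ball)
    obtain n where n: "inverse (real (Suc n)) < e/2" using e(1)
      using reals_Archimedean[of "e/2"] by auto
    obtain z where z: "z \<in> F n" "x \<in> ball z (inverse (real (Suc n)))" using F(2)[of n] by blast
    have "ball z (inverse (real (Suc n))) \<subseteq> ball x e"
    proof
      fix w assume "w \<in> ball z (inverse (real (Suc n)))"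
      then show "w \<in> ball x e" using z n dist_triangle[of x w z] by (auto simp: dist_commute)
    qed
    then show "\<exists>B'\<in>B. x \<in> B' \<and> B' \<subseteq> O'" using z e unfolding B_def by blast
  qed
  ultimately show ?thesis using that by blast
qed

lemma sets_borel_prod_compact:
  assumes "compact (UNIV::'a::metric_space set)" "compact (UNIV::'b::metric_space set)"
  shows "sets (borel \<Otimes>\<^sub>M borel) = sets (borel :: ('a \<times> 'b) measure)"
proof
  have "(\<lambda>x. (fst x, snd x)) \<in> measurable borel (borel \<Otimes>\<^sub>M (borel::'b measure))"
    by (intro measurable_Pair borel_measurable_continuous_onI continuous_intros)
  then have "id \<in> measurable borel (borel \<Otimes>\<^sub>M (borel::'b measure))" by (simp add: id_def)
  then show "sets (borel \<Otimes>\<^sub>M borel) \<subseteq> sets (borel :: ('a \<times> 'b) measure)"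
    using measurable_sets[of id borel "borel \<Otimes>\<^sub>M borel"] by (auto simp: space_pair_measure)
next
  obtain Ba :: "'a set set" where Ba: "countable Ba" "topological_basis Ba"
    using compact_countable_basis[OF assms(1)] by blast
  obtain Bb :: "'b set set" where Bb: "countable Bb" "topological_basis Bb"
    using compact_countable_basis[OF assms(2)] by blast
  define BB where "BB = (\<lambda>(a, b). a \<times> b) ` (Ba \<times> Bb)"
  have BB: "countable BB" "topological_basis BB"
    using Ba Bb unfolding BB_def by (auto intro: topological_basis_prod)
  have Bopen: "\<And>b. b \<in> BB \<Longrightarrow> b \<in> sets (borel \<Otimes>\<^sub>M borel)"
    using Ba(2) Bb(2) unfolding BB_def by (auto simp: topological_basis_def)
  have opn: "S \<in> sets (borel \<Otimes>\<^sub>M borel)" if "open S" for S :: "('a \<times> 'b) set"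
  proof -
    obtain K where K: "K \<subseteq> BB" "\<Union>K = S" using BB(2) \<open>open S\<close> by (auto simp: topological_basis_def)
    have "countable K" using K BB(1) countable_subset by blast
    then show ?thesis using K Bopen
      by (metis (no_types, lifting) sets.countable_Union subset_iff)
  qed
  have "id \<in> measurable (borel \<Otimes>\<^sub>M borel) (borel :: ('a \<times> 'b) measure)"
    by (rule borel_measurableI) (use opn in \<open>auto simp: space_pair_measure\<close>)
  then show "sets (borel :: ('a \<times> 'b) measure) \<subseteq> sets (borel \<Otimes>\<^sub>M borel)"
    using measurable_sets[of id "borel \<Otimes>\<^sub>M borel" borel] by (auto simp: space_pair_measure)
qed


lemma cont_bound:
  fixes f :: "'a::topological_space \<Rightarrow> real"
  assumes "compact (UNIV::'a set)" "continuous_on UNIV f"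
  obtains B where "\<And>x. \<bar>f x\<bar> \<le> B"
proof -
  have "compact (f ` UNIV)" using assms compact_continuous_image by blast
  then have "bounded (f ` UNIV)" by (rule compact_imp_bounded)
  then show ?thesis using that by (auto simp: bounded_real)
qed

lemma integrable_cont_bound:
  fixes f :: "'a::topological_space \<Rightarrow> real"
  assumes "finite_measure M" "sets M = sets borel" "continuous_on UNIV f" "\<And>x. \<bar>f x\<bar> \<le> B"
  shows "integrable M f"
proof -
  interpret finite_measure M by fact
  have "f \<in> borel_measurable M"
    using borel_measurable_continuous_onI[OF assms(3)] measurable_cong_sets[OF assms(2) refl] by blast
  then show ?thesis using assms(4) by (intro integrable_const_bound[where B=B]) auto
qed

locale ctx =
  fixes c :: "'a::metric_space \<times> 'b::metric_space \<Rightarrow> real"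
  assumes cA: "compact (UNIV :: 'a set)" and cB: "compact (UNIV :: 'b set)"
    and cc: "continuous_on UNIV c"
begin

lemma c_bound: obtains Bc where "\<And>p. \<bar>c p\<bar> \<le> Bc"
proof -
  have "compact (UNIV :: ('a \<times> 'b) set)" using compact_Times[OF cA cB] by simp
  then show ?thesis using cont_bound[OF _ cc] that by blast
qed

context
  fixes \<phi> :: "'a \<Rightarrow> real"
  assumes pc: "continuous_on UNIV \<phi>"
begin

lemma ct_bdd: "bdd_above (range (\<lambda>x. \<phi> x - c (x, y)))"
proof -
  obtain Bc where Bc: "\<And>p. \<bar>c p\<bar> \<le> Bc" using c_bound by blast
  obtain Bp where Bp: "\<And>x. \<bar>\<phi> x\<bar> \<le> Bp" using cont_bound[OF cA pc] by blast
  show ?thesis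
  proof (rule bdd_aboveI2)
    fix x show "\<phi> x - c (x, y) \<le> Bp + Bc" using Bc[of "(x,y)"] Bp[of x] by linarith
  qed
qed

lemma ct_upper: "\<phi> x - c (x, y) \<le> c_transform c \<phi> y"
  unfolding c_transform_def by (rule cSUP_upper[OF _ ct_bdd]) simp

lemma ct_least: "(\<And>x. \<phi> x - c (x, y) \<le> t) \<Longrightarrow> c_transform c \<phi> y \<le> t"
  unfolding c_transform_def by (rule cSUP_least) auto

lemma ct_bound: obtains B where "\<And>y. \<bar>c_transform c \<phi> y\<bar> \<le> B"
proof -
  obtain Bc where Bc: "\<And>p. \<bar>c p\<bar> \<le> Bc" using c_bound by blast
  obtain Bp where Bp: "\<And>x. \<bar>\<phi> x\<bar> \<le> Bp" using cont_bound[OF cA pc] by blast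
  have "\<bar>c_transform c \<phi> y\<bar> \<le> Bp + Bc" for y
  proof -
    have "c_transform c \<phi> y \<le> Bp + Bc"
      by (rule ct_least) (use Bc Bp in \<open>smt (verit)\<close>)
    moreover have "\<phi> undefined - c (undefined, y) \<le> c_transform c \<phi> y" by (rule ct_upper)
    ultimately show ?thesis using Bc[of "(undefined,y)"] Bp[of undefined] by linarith
  qed
  then show ?thesis using that by blast
qed

lemma ct_cont: "continuous_on UNIV (c_transform c \<phi>)"
proof -
  have uc: "uniformly_continuous_on UNIV c"
    using compact_uniformly_continuous[OF cc] compact_Times[OF cA cB] by simp
  show ?thesis unfolding continuous_on_iff
  proof (intro ballI allI impI)
    fix y :: 'b and e :: real assume "e > 0"
    then obtain d where d: "d > 0" "\<And>p q. dist p q < d \<Longrightarrow> dist (c p) (c q) < e/2"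
      using uc unfolding uniformly_continuous_on_def by (meson UNIV_I half_gt_zero)
    show "\<exists>d>0. \<forall>y'\<in>UNIV. dist y' y < d \<longrightarrow> dist (c_transform c \<phi> y') (c_transform c \<phi> y) < e"
    proof (intro exI conjI ballI impI)
      fix y' assume "dist y' y < d"
      then have dd: "\<bar>c (x, y') - c (x, y)\<bar> < e/2" for x
        using d(2)[of "(x,y')" "(x,y)"] by (simp add: dist_Pair_Pair dist_real_def)
      have 1: "c_transform c \<phi> y' \<le> c_transform c \<phi> y + e/2"
      proof (rule ct_least)
        fix x show "\<phi> x - c (x, y') \<le> c_transform c \<phi> y + e / 2"
          using ct_upper[of x y] dd[of x] by linarith
      qed
      have 2: "c_transform c \<phi> y \<le> c_transform c \<phi> y' + e/2"
      proof (rule ct_least)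
        fix x show "\<phi> x - c (x, y) \<le> c_transform c \<phi> y' + e / 2"
          using ct_upper[of x y'] dd[of x] by linarith
      qed
      show "dist (c_transform c \<phi> y') (c_transform c \<phi> y) < e"
        using 1 2 \<open>e > 0\<close> by (simp add: dist_real_def)
    qed (use d in auto)
  qed
qed

end

lemma coupling_ex:
  assumes "prob_space \<mu>" "sets \<mu> = sets (borel::'a measure)" "prob_space \<nu>" "sets \<nu> = sets (borel::'b measure)"
  shows "\<mu> \<Otimes>\<^sub>M \<nu> \<in> couplings \<mu> \<nu>"
proof -
  interpret m: prob_space \<mu> by fact
  interpret n: prob_space \<nu> by fact
  have sp: "sets (\<mu> \<Otimes>\<^sub>M \<nu>) = sets (borel :: ('a\<times>'b) measure)"
    using sets_pair_measure_cong[OF assms(2) assms(4)] sets_borel_prod_compact[OF cA cB] by simp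
  have spm: "space \<mu> = UNIV" "space \<nu> = UNIV"
    using sets_eq_imp_space_eq[OF assms(2)] sets_eq_imp_space_eq[OF assms(4)] by auto
  have "distr (\<mu> \<Otimes>\<^sub>M \<nu>) borel fst = \<mu>"
  proof (rule measure_eqI)
    show "sets (distr (\<mu> \<Otimes>\<^sub>M \<nu>) borel fst) = sets \<mu>" using assms(2) by simp
  next
    fix A assume "A \<in> sets (distr (\<mu> \<Otimes>\<^sub>M \<nu>) borel fst)"
    then have A: "A \<in> sets \<mu>" using assms(2) by simp
    have "emeasure (distr (\<mu> \<Otimes>\<^sub>M \<nu>) borel fst) A = emeasure (\<mu> \<Otimes>\<^sub>M \<nu>) (A \<times> UNIV)"
      using A assms(2) spm
      by (subst emeasure_distr) (auto simp: space_pair_measure intro!: arg_cong2[where f=emeasure])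
    also have "\<dots> = emeasure \<mu> A"
      using A spm n.emeasure_pair_measure_Times[OF A sets.top[of \<nu>]] n.emeasure_space_1 by simp
    finally show "emeasure (distr (\<mu> \<Otimes>\<^sub>M \<nu>) borel fst) A = emeasure \<mu> A" .
  qed
  moreover have "distr (\<mu> \<Otimes>\<^sub>M \<nu>) borel snd = \<nu>"
  proof (rule measure_eqI)
    show "sets (distr (\<mu> \<Otimes>\<^sub>M \<nu>) borel snd) = sets \<nu>" using assms(4) by simp
  next
    fix A assume "A \<in> sets (distr (\<mu> \<Otimes>\<^sub>M \<nu>) borel snd)"
    then have A: "A \<in> sets \<nu>" using assms(4) by simp
    have "emeasure (distr (\<mu> \<Otimes>\<^sub>M \<nu>) borel snd) A = emeasure (\<mu> \<Otimes>\<^sub>M \<nu>) (UNIV \<times> A)"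
      using A assms(4) spm
      by (subst emeasure_distr) (auto simp: space_pair_measure intro!: arg_cong2[where f=emeasure])
    also have "\<dots> = emeasure \<nu> A"
      using A spm n.emeasure_pair_measure_Times[OF sets.top[of \<mu>] A] m.emeasure_space_1 by simp
    finally show "emeasure (distr (\<mu> \<Otimes>\<^sub>M \<nu>) borel snd) A = emeasure \<nu> A" .
  qed
  ultimately show ?thesis using sp unfolding couplings_def by blast
qed

lemma weak_duality_pi:
  assumes "prob_space \<mu>" "sets \<mu> = sets (borel::'a measure)" "prob_space \<nu>" "sets \<nu> = sets (borel::'b measure)"
    and pc: "continuous_on UNIV \<phi>" and pi: "\<pi> \<in> couplings \<mu> \<nu>"
  shows "integral\<^sup>L \<mu> \<phi> - integral\<^sup>L \<nu> (c_transform c \<phi>) \<le> integral\<^sup>L \<pi> c"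
proof -
  interpret m: prob_space \<mu> by fact
  have sp: "sets \<pi> = sets borel" and d1: "distr \<pi> borel fst = \<mu>" and d2: "distr \<pi> borel snd = \<nu>"
    using pi by (auto simp: couplings_def)
  have mf: "fst \<in> measurable \<pi> (borel::'a measure)"
    using borel_measurable_continuous_onI[OF continuous_on_fst[OF continuous_on_id]] measurable_cong_sets[OF sp refl] by auto
  have ms: "snd \<in> measurable \<pi> (borel::'b measure)"
    using borel_measurable_continuous_onI[OF continuous_on_snd[OF continuous_on_id]] measurable_cong_sets[OF sp refl] by auto
  have "emeasure \<pi> (space \<pi>) = emeasure (distr \<pi> borel fst) UNIV"
    using mf by (subst emeasure_distr) auto
  also have "\<dots> = 1" using d1 m.emeasure_space_1 sets_eq_imp_space_eq[OF assms(2)] by simp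
  finally have "prob_space \<pi>" by (rule prob_spaceI)
  then interpret p: prob_space \<pi> .
  have fm: "finite_measure \<pi>" by (rule p.finite_measure_axioms)
  obtain Bp where Bp: "\<And>x. \<bar>\<phi> x\<bar> \<le> Bp" using cont_bound[OF cA pc] by blast
  obtain Bt where Bt: "\<And>y. \<bar>c_transform c \<phi> y\<bar> \<le> Bt" using ct_bound[OF pc] by blast
  obtain Bc where Bc: "\<And>p. \<bar>c p\<bar> \<le> Bc" using c_bound by blast
  have ctc: "continuous_on UNIV (c_transform c \<phi>)" by (rule ct_cont[OF pc])
  have i1: "integral\<^sup>L \<mu> \<phi> = integral\<^sup>L \<pi> (\<lambda>p. \<phi> (fst p))"
    using integral_distr[OF mf borel_measurable_continuous_onI[OF pc]] d1 by simp
  have i2: "integral\<^sup>L \<nu> (c_transform c \<phi>) = integral\<^sup>L \<pi> (\<lambda>p. c_transform c \<phi> (snd p))"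
    using integral_distr[OF ms borel_measurable_continuous_onI[OF ctc]] d2 by simp
  have int1: "integrable \<pi> (\<lambda>p. \<phi> (fst p))"
    by (rule integrable_cont_bound[OF fm sp, where B=Bp]) (auto intro!: continuous_intros continuous_on_compose2[OF pc] simp: Bp)
  have int2: "integrable \<pi> (\<lambda>p. c_transform c \<phi> (snd p))"
    by (rule integrable_cont_bound[OF fm sp, where B=Bt]) (auto intro!: continuous_intros continuous_on_compose2[OF ctc] simp: Bt)
  have int3: "integrable \<pi> c"
    by (rule integrable_cont_bound[OF fm sp cc Bc])
  have "integral\<^sup>L \<mu> \<phi> - integral\<^sup>L \<nu> (c_transform c \<phi>) = integral\<^sup>L \<pi> (\<lambda>p. \<phi> (fst p) - c_transform c \<phi> (snd p))"
    using i1 i2 int1 int2 by simp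
  also have "\<dots> \<le> integral\<^sup>L \<pi> c"
  proof (rule integral_mono)
    show "integrable \<pi> (\<lambda>p. \<phi> (fst p) - c_transform c \<phi> (snd p))" using int1 int2 by simp
    show "integrable \<pi> c" by fact
    fix p :: "'a \<times> 'b"
    show "\<phi> (fst p) - c_transform c \<phi> (snd p) \<le> c p"
      using ct_upper[OF pc, of "fst p" "snd p"] by simp
  qed
  finally show ?thesis .
qed

lemma weak_duality:
  assumes "prob_space \<mu>" "sets \<mu> = sets (borel::'a measure)" "prob_space \<nu>" "sets \<nu> = sets (borel::'b measure)"
    and pc: "continuous_on UNIV \<phi>"
  shows "integral\<^sup>L \<mu> \<phi> - integral\<^sup>L \<nu> (c_transform c \<phi>) \<le> ot_cost c \<mu> \<nu>"
  unfolding ot_cost_def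
proof (rule cInf_greatest)
  show "{integral\<^sup>L \<pi> c |\<pi>. \<pi> \<in> couplings \<mu> \<nu>} \<noteq> {}" using coupling_ex[OF assms(1-4)] by blast
  fix t assume "t \<in> {integral\<^sup>L \<pi> c |\<pi>. \<pi> \<in> couplings \<mu> \<nu>}"
  then show "integral\<^sup>L \<mu> \<phi> - integral\<^sup>L \<nu> (c_transform c \<phi>) \<le> t"
    using weak_duality_pi[OF assms] by blast
qed

end

lemma integrable_cont_compact:
  fixes g :: "'x::topological_space \<Rightarrow> real"
  assumes "compact (UNIV::'x set)" "prob_space M" "sets M = sets borel" "continuous_on UNIV g"
  shows "integrable M g"
proof -
  obtain B where "\<And>x. \<bar>g x\<bar> \<le> B" using cont_bound[OF assms(1,4)] by blast
  moreover have "finite_measure M" using assms(2) by (simp add: prob_space.finite_measure)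
  ultimately show ?thesis using integrable_cont_bound assms by blast
qed

lemma measure_le_int:
  fixes f :: "'x::topological_space \<Rightarrow> real"
  assumes "compact (UNIV::'x set)"
    and p1: "prob_space \<mu>1" and s1: "sets \<mu>1 = sets borel"
    and p2: "prob_space \<mu>2" and s2: "sets \<mu>2 = sets borel"
    and U: "U \<in> sets borel" and le: "measure_le_on \<mu>1 \<mu>2 U"
    and fc: "continuous_on UNIV f" and f0: "\<And>x. 0 \<le> f x" and fU: "\<And>x. x \<notin> U \<Longrightarrow> f x = 0"
  shows "integral\<^sup>L \<mu>1 f \<le> integral\<^sup>L \<mu>2 f"
proof -
  have U1: "U \<in> sets \<mu>1" and U2: "U \<in> sets \<mu>2" using U s1 s2 by auto
  have i1: "integrable \<mu>1 f" and i2: "integrable \<mu>2 f"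
    using integrable_cont_compact[OF assms(1) p1 s1 fc] integrable_cont_compact[OF assms(1) p2 s2 fc] by auto
  have sd: "sets (density \<mu>1 (indicator U)) = sets (density \<mu>2 (indicator U))" using s1 s2 by simp
  have "density \<mu>1 (indicator U) \<le> density \<mu>2 (indicator U)"
  proof -
    have "emeasure (density \<mu>1 (indicator U)) X \<le> emeasure (density \<mu>2 (indicator U)) X" for X
    proof (cases "X \<in> sets \<mu>1")
      case True
      then have X2: "X \<in> sets \<mu>2" using s1 s2 by simp
      have "U \<inter> X \<in> sets \<mu>1" using True U1 by auto
      then show ?thesis using le unfolding measure_le_on_def
        by (simp add: emeasure_restricted[OF U1 True] emeasure_restricted[OF U2 X2])
    next
      case False
      then have "X \<notin> sets \<mu>2" using s1 s2 by simp
      then show ?thesis using False by (simp add: emeasure_notin_sets)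
    qed
    then show ?thesis using sd sets_eq_imp_space_eq[OF sd] by (simp add: le_measure_iff le_fun_def)
  qed
  then have "nn_integral (density \<mu>1 (indicator U)) (\<lambda>x. ennreal (f x)) \<le> nn_integral (density \<mu>2 (indicator U)) (\<lambda>x. ennreal (f x))"
    using nn_integral_mono_measure[OF sd] by blast
  moreover have "nn_integral (density M (indicator U)) (\<lambda>x. ennreal (f x)) = nn_integral M (\<lambda>x. ennreal (f x))"
    if "U \<in> sets M" "sets M = sets borel" for M :: "'x measure"
  proof -
    have mf: "f \<in> borel_measurable M"
      using borel_measurable_continuous_onI[OF fc] measurable_cong_sets[OF that(2) refl] by blast
    have "(\<lambda>x. ennreal (f x)) \<in> borel_measurable M" using mf by measurable
    have "nn_integral (density M (indicator U)) (\<lambda>x. ennreal (f x)) = (\<integral>\<^sup>+ x. indicator U x * ennreal (f x) \<partial>M)"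
      using that \<open>(\<lambda>x. ennreal (f x)) \<in> borel_measurable M\<close> by (intro nn_integral_density) auto
    also have "\<dots> = nn_integral M (\<lambda>x. ennreal (f x))"
      by (intro nn_integral_cong) (auto simp: indicator_def fU)
    finally show ?thesis .
  qed
  ultimately have "nn_integral \<mu>1 (\<lambda>x. ennreal (f x)) \<le> nn_integral \<mu>2 (\<lambda>x. ennreal (f x))"
    using U1 U2 s1 s2 by simp
  then have "ennreal (integral\<^sup>L \<mu>1 f) \<le> ennreal (integral\<^sup>L \<mu>2 f)"
    using nn_integral_eq_integral[OF i1] nn_integral_eq_integral[OF i2] f0 by simp
  moreover have "0 \<le> integral\<^sup>L \<mu>2 f" using f0 by (simp add: integral_nonneg)
  ultimately show ?thesis by (simp add: ennreal_le_iff)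
qed

theorem corollary3p3:
  fixes c :: "'a::metric_space \<times> 'b::metric_space \<Rightarrow> real"
    and \<mu>1 \<mu>2 :: "'a measure" and \<nu> :: "'b measure"
    and \<phi>1 \<phi>2 :: "'a \<Rightarrow> real" and U :: "'a set"
  assumes "compact (UNIV :: 'a set)" and "compact (UNIV :: 'b set)"
    and "continuous_on UNIV c"
    and "prob_space \<mu>1" "sets \<mu>1 = sets borel"
    and "prob_space \<mu>2" "sets \<mu>2 = sets borel"
    and "prob_space \<nu>" "sets \<nu> = sets borel"
    and "\<phi>1 \<in> kantorovich_potentials c \<mu>1 \<nu>"
    and "\<phi>2 \<in> kantorovich_potentials c \<mu>2 \<nu>"
    and "kantorovich_potentials c \<mu>1 \<nu> = {(\<lambda>x. \<phi>1 x + C) | C. True}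
       \<or> kantorovich_potentials c \<mu>2 \<nu> = {(\<lambda>x. \<phi>2 x + C) | C. True}"
    and "U \<in> sets borel" and "U \<noteq> UNIV"
    and "measure_le_on \<mu>1 \<mu>2 U"
    and "\<forall>x \<in> UNIV - U. \<phi>1 x \<le> \<phi>2 x"
  shows "\<forall>x. \<phi>1 x \<le> \<phi>2 x"
proof -
  note A = assms
  interpret ctx c using A(1-3) by unfold_locales
  have pc1: "continuous_on UNIV \<phi>1" and T1: "integral\<^sup>L \<mu>1 \<phi>1 - integral\<^sup>L \<nu> (c_transform c \<phi>1) = ot_cost c \<mu>1 \<nu>"
    using A(10) by (auto simp: kantorovich_potentials_def)
  have pc2: "continuous_on UNIV \<phi>2" and T2: "integral\<^sup>L \<mu>2 \<phi>2 - integral\<^sup>L \<nu> (c_transform c \<phi>2) = ot_cost c \<mu>2 \<nu>"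
    using A(11) by (auto simp: kantorovich_potentials_def)
  define f where "f x = max 0 (\<phi>1 x - \<phi>2 x)" for x
  define \<psi> where "\<psi> x = max (\<phi>1 x) (\<phi>2 x)" for x
  define chi where "chi x = min (\<phi>1 x) (\<phi>2 x)" for x
  have fc: "continuous_on UNIV f" unfolding f_def using pc1 pc2 by (intro continuous_intros) auto
  have psc: "continuous_on UNIV \<psi>" unfolding \<psi>_def using pc1 pc2 by (intro continuous_intros) auto
  have chc: "continuous_on UNIV chi" unfolding chi_def using pc1 pc2 by (intro continuous_intros) auto
  have psf: "\<psi> = (\<lambda>x. \<phi>2 x + f x)" unfolding \<psi>_def f_def by (auto simp: fun_eq_iff max_def)
  have chf: "chi = (\<lambda>x. \<phi>1 x - f x)" unfolding chi_def f_def by (auto simp: fun_eq_iff min_def)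
  have intA: "integrable M g" if "prob_space M" "sets M = sets borel" "continuous_on UNIV g" for M and g :: "'a \<Rightarrow> real"
    using integrable_cont_compact[OF A(1) that] .
  have intB: "integrable \<nu> g" if "continuous_on UNIV g" for g :: "'b \<Rightarrow> real"
    using integrable_cont_compact[OF A(2) A(8,9) that] .
  have ich: "integral\<^sup>L \<mu>1 chi = integral\<^sup>L \<mu>1 \<phi>1 - integral\<^sup>L \<mu>1 f"
    unfolding chf using intA[OF A(4,5) pc1] intA[OF A(4,5) fc] by simp
  have ips: "integral\<^sup>L \<mu>2 \<psi> = integral\<^sup>L \<mu>2 \<phi>2 + integral\<^sup>L \<mu>2 f"
    unfolding psf using intA[OF A(6,7) pc2] intA[OF A(6,7) fc] by simp
  have fle: "integral\<^sup>L \<mu>1 f \<le> integral\<^sup>L \<mu>2 f"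
    by (rule measure_le_int[OF A(1) A(4,5) A(6,7) A(13) A(15) fc]) (use A(16) in \<open>auto simp: f_def\<close>)
  have ctle: "c_transform c chi y + c_transform c \<psi> y \<le> c_transform c \<phi>1 y + c_transform c \<phi>2 y" for y
  proof -
    have "c_transform c chi y \<le> c_transform c \<phi>1 y"
      by (rule ct_least[OF chc]) (smt (verit) chi_def ct_upper[OF pc1])
    moreover have "c_transform c chi y \<le> c_transform c \<phi>2 y"
      by (rule ct_least[OF chc]) (smt (verit) chi_def ct_upper[OF pc2])
    moreover have "c_transform c \<psi> y \<le> max (c_transform c \<phi>1 y) (c_transform c \<phi>2 y)"
      by (rule ct_least[OF psc]) (smt (verit) \<psi>_def ct_upper[OF pc1] ct_upper[OF pc2])
    ultimately show ?thesis by linarith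
  qed
  have ctint: "integral\<^sup>L \<nu> (c_transform c chi) + integral\<^sup>L \<nu> (c_transform c \<psi>)
      \<le> integral\<^sup>L \<nu> (c_transform c \<phi>1) + integral\<^sup>L \<nu> (c_transform c \<phi>2)"
  proof -
    have i: "integrable \<nu> (c_transform c g)" if "continuous_on UNIV g" for g
      using intB[OF ct_cont[OF that]] .
    have "integral\<^sup>L \<nu> (\<lambda>y. c_transform c chi y + c_transform c \<psi> y)
       \<le> integral\<^sup>L \<nu> (\<lambda>y. c_transform c \<phi>1 y + c_transform c \<phi>2 y)"
      by (rule integral_mono) (use ctle i chc psc pc1 pc2 in auto)
    then show ?thesis using i[OF chc] i[OF psc] i[OF pc1] i[OF pc2] by simp
  qed
  have W1: "integral\<^sup>L \<mu>1 chi - integral\<^sup>L \<nu> (c_transform c chi) \<le> ot_cost c \<mu>1 \<nu>"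
    by (rule weak_duality[OF A(4,5,8,9) chc])
  have W2: "integral\<^sup>L \<mu>2 \<psi> - integral\<^sup>L \<nu> (c_transform c \<psi>) \<le> ot_cost c \<mu>2 \<nu>"
    by (rule weak_duality[OF A(6,7,8,9) psc])
  have E1: "integral\<^sup>L \<mu>1 chi - integral\<^sup>L \<nu> (c_transform c chi) = ot_cost c \<mu>1 \<nu>"
    using W1 W2 T1 T2 ich ips fle ctint by linarith
  have E2: "integral\<^sup>L \<mu>2 \<psi> - integral\<^sup>L \<nu> (c_transform c \<psi>) = ot_cost c \<mu>2 \<nu>"
    using W1 W2 T1 T2 ich ips fle ctint by linarith
  have K1: "chi \<in> kantorovich_potentials c \<mu>1 \<nu>" using chc E1 by (simp add: kantorovich_potentials_def)
  have K2: "\<psi> \<in> kantorovich_potentials c \<mu>2 \<nu>" using psc E2 by (simp add: kantorovich_potentials_def)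
  obtain x0 where x0: "x0 \<notin> U" using A(14) by blast
  have le0: "\<phi>1 x0 \<le> \<phi>2 x0" using A(16) x0 by blast
  show ?thesis
    using A(12)
  proof
    assume "kantorovich_potentials c \<mu>1 \<nu> = {(\<lambda>x. \<phi>1 x + C) | C. True}"
    then obtain C where C: "chi = (\<lambda>x. \<phi>1 x + C)" using K1 by blast
    have "C = 0" using fun_cong[OF C, of x0] le0 by (simp add: chi_def)
    then show ?thesis using C by (auto simp: fun_eq_iff chi_def min_def split: if_splits)
  next
    assume "kantorovich_potentials c \<mu>2 \<nu> = {(\<lambda>x. \<phi>2 x + C) | C. True}"
    then obtain C where C: "\<psi> = (\<lambda>x. \<phi>2 x + C)" using K2 by blast
    have "C = 0" using fun_cong[OF C, of x0] le0 by (simp add: \<psi>_def)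
    then show ?thesis using C by (auto simp: fun_eq_iff \<psi>_def max_def split: if_splits)
  qed
qed

end
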